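(* Under Algorithm 2(b) below (drop when seen, with field size $q\ge n$), at the end of every slot the sender's physical queue size is at most the sum over the $n$ receivers of their virtual queue sizes (the degrees-of-freedom backlogs between the sender and each receiver). Consequently, if $\lambda<\mu$, the expected size of the physical queue in steady state is $O\left(\frac{1}{1-\rho}\right)$ as $\rho=\lambda/\mu\to1^-$ (with $\lambda,\mu\in(0,1)$ and one of them held fixed).
   Context: Model: a sender broadcasts a stream of packets to $n$ receivers. Packets are fixed-length vectors over $\mathbb{F}_q$; the $k$-th arriving packet is $\mathbf{p}_k$. Time is slotted; in each slot one packet arrives with probability $\lambda$ independently (just after the slot begins). The sender transmits at most one linear combination of packets in its queue per slot (coefficients in the header). Each receiver independently receives it with probability $\mu$, else a detectable erasure; independent across receivers and slots. Perfect feedback reaches the sender before the end of the slot; drops happen just before the end of the slot; queue sizes are measured at the end of the slot; $\rho=\lambda/\mu$. A node's knowledge space is the space of coefficient vectors (w.r.t. arrived packets) of linear combinations it can compute; the sender's is $\mathbb{F}_q^{A}$ after $A$ arrivals. The virtual queue size of receiver $j$ is $\dim$(sender's knowledge space) $-\dim$(receiver $j$'s knowledge space). A node has seen $\mathbf{p}_k$ if it can compute $\mathbf{p}_k+\mathbf{q}$ with $\mathbf{q}$ a linear combination of packets of index greater than $k$. If receiver $r$ has seen $\mathbf{p}_k$, its witness $\mathbf{W}_r(\mathbf{p}_k)$ is the unique linear combination it knows of the form $\mathbf{p}_k+\mathbf{q}$ where $\mathbf{q}$ involves only packets of index greater than $k$ that $r$ has not seen. A receiver's next unseen packet is the lowest-index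 packet it has not seen. Algorithm 2(b): Queue rule: at the end of each slot, drop from the queue every packet that all $n$ receivers have seen. Coding module: let $u_1<\dots<u_m$ be the distinct indices of the next unseen packets of those receivers whose next unseen packet has arrived at the sender, and $R(u_i)$ the set of such receivers whose next unseen packet is $\mathbf{p}_{u_i}$. For $j=1,\dots,m$: for each $r\in R(u_j)$ let $\mathbf{y}_r=\sum_{i<j}\alpha_i\mathbf{W}_r(\mathbf{p}_{u_i})$, and choose $\alpha_j\in\mathbb{F}_q$ different from the coefficient of $\mathbf{p}_{u_j}$ in $\mathbf{y}_r$ for every $r\in R(u_j)$. Transmit $\mathbf{g}=\sum_{i=1}^m\alpha_i\mathbf{p}_{u_i}$ (nothing if the queue is empty). *)

theory Defs
  imports "HOL-Probability.Probability" "HOL-Library.Function_Algebras"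
begin

text \<open>Packets are indexed 0,1,2,... in order of arrival (packet k is the (k+1)-st
arrival).  A linear combination of packets is represented by its coefficient
vector, a function nat => 'f (coefficient of packet i at position i).
The field F_q is a finite field type 'f, so q = CARD('f).
Receivers form a finite type 'r, so n = CARD('r).\<close>

type_synonym 'f cvec = "nat \<Rightarrow> 'f"

definition cscale :: "'f::field \<Rightarrow> 'f cvec \<Rightarrow> 'f cvec" where
  "cscale c v = (\<lambda>i. c * v i)"

definition cspan :: "'f::field cvec set \<Rightarrow> 'f cvec set" where
  "cspan S = module.span cscale S"

definition cdim :: "'f::field cvec set \<Rightarrow> nat" where
  "cdim V = vector_space.dim cscale V"

definition sender_space :: "nat \<Rightarrow> 'f::field cvec set" where
  "sender_space A = {v. \<forall>i\<ge>A. v i = 0}"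

text \<open>A node with knowledge space V has seen packet k iff it can compute
p_k + q with q a combination of packets of index > k.\<close>
definition seen :: "'f::field cvec set \<Rightarrow> nat \<Rightarrow> bool" where
  "seen V k \<longleftrightarrow> (\<exists>v\<in>V. v k = 1 \<and> (\<forall>i<k. v i = 0))"

text \<open>Witness of packet k: the unique known combination p_k + q with q involving only
packets of index > k that are not seen.\<close>
definition witness :: "'f::field cvec set \<Rightarrow> nat \<Rightarrow> 'f cvec" where
  "witness V k = (THE w. w \<in> V \<and> w k = 1 \<and> (\<forall>i<k. w i = 0) \<and>
                        (\<forall>i>k. w i \<noteq> 0 \<longrightarrow> \<not> seen V i))"

definition next_unseen :: "'f::field cvec set \<Rightarrow> nat" where
  "next_unseen V = (LEAST k. \<not> seen V k)"

text \<open>Given the number A of packets that have arrived at the sender (including any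
arrival in the current slot) and the receivers' knowledge spaces K at the start of
the slot, g is a transmission allowed by the coding module of Algorithm 2(b).
U is the set of the indices u_1 < ... < u_m; R u is R(u); the coefficient alpha u
plays the role of alpha_j for u = u_j.  The coefficient of p_(u_j) in
y_r = sum_(i<j) alpha_i W_r(p_(u_i)) is the sum below.  If the queue is empty then
U is empty and g = 0, i.e. nothing (useful) is sent.\<close>
definition active_rcv :: "nat \<Rightarrow> ('r \<Rightarrow> 'f::field cvec set) \<Rightarrow> 'r set" where
  "active_rcv A K = {r. next_unseen (K r) < A}"

definition U_idx :: "nat \<Rightarrow> ('r \<Rightarrow> 'f::field cvec set) \<Rightarrow> nat set" where
  "U_idx A K = (\<lambda>r. next_unseen (K r)) ` active_rcv A K"

definition R_set :: "nat \<Rightarrow> ('r \<Rightarrow> 'f::field cvec set) \<Rightarrow> nat \<Rightarrow> 'r set" where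
  "R_set A K u = {r \<in> active_rcv A K. next_unseen (K r) = u}"

definition valid_tx :: "nat \<Rightarrow> ('r \<Rightarrow> 'f::field cvec set) \<Rightarrow> 'f cvec \<Rightarrow> bool" where
  "valid_tx A K g \<longleftrightarrow>
     (\<exists>\<alpha>::nat \<Rightarrow> 'f.
        (\<forall>u\<in>U_idx A K. \<forall>r\<in>R_set A K u.
            \<alpha> u \<noteq> (\<Sum>u'\<in>{u'\<in>U_idx A K. u' < u}. \<alpha> u' * witness (K r) u' u)) \<and>
        g = (\<lambda>i. if i \<in> U_idx A K then \<alpha> i else 0))"

text \<open>Slots are numbered 0,1,2,...; a t: a packet arrives in slot t;
e t r: receiver r receives the transmission of slot t; g t: coefficient vector
transmitted in slot t.  Quantities indexed by t below are "after t slots", i.e.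
at the end of slot t-1 (t = 0: initial state).\<close>

definition arr :: "(nat \<Rightarrow> bool) \<Rightarrow> nat \<Rightarrow> nat" where
  "arr a t = card {s. s < t \<and> a s}"

definition know :: "(nat \<Rightarrow> 'r \<Rightarrow> bool) \<Rightarrow> (nat \<Rightarrow> 'f::field cvec) \<Rightarrow> nat \<Rightarrow> 'r \<Rightarrow> 'f cvec set" where
  "know e g t r = cspan {g s | s. s < t \<and> e s r}"

text \<open>The transmission of slot t is chosen by the coding module from the arrivals
up to and including slot t and the receivers' knowledge at the start of slot t.\<close>
definition valid_run :: "(nat \<Rightarrow> bool) \<Rightarrow> (nat \<Rightarrow> 'r \<Rightarrow> bool) \<Rightarrow> (nat \<Rightarrow> 'f::field cvec) \<Rightarrow> bool" where
  "valid_run a e g \<longleftrightarrow> (\<forall>t. valid_tx (arr a (Suc t)) (know e g t) (g t))"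

fun queue :: "(nat \<Rightarrow> bool) \<Rightarrow> (nat \<Rightarrow> 'r \<Rightarrow> bool) \<Rightarrow> (nat \<Rightarrow> 'f::field cvec) \<Rightarrow> nat \<Rightarrow> nat set" where
  "queue a e g 0 = {}"
| "queue a e g (Suc t) =
     (queue a e g t \<union> {arr a t..<arr a (Suc t)}) - {k. \<forall>r. seen (know e g (Suc t) r) k}"

definition virtual_queue :: "(nat \<Rightarrow> bool) \<Rightarrow> (nat \<Rightarrow> 'r \<Rightarrow> bool) \<Rightarrow> (nat \<Rightarrow> 'f::field cvec) \<Rightarrow> nat \<Rightarrow> 'r \<Rightarrow> nat" where
  "virtual_queue a e g t r = cdim (sender_space (arr a t) :: 'f cvec set) - cdim (know e g t r)"

text \<open>Outcome of one slot: (arrival?, set of receivers that receive).\<close>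
definition slot_pmf :: "real \<Rightarrow> real \<Rightarrow> (bool \<times> ('r::finite \<Rightarrow> bool)) pmf" where
  "slot_pmf lam mu = pair_pmf (bernoulli_pmf lam) (Pi_pmf UNIV False (\<lambda>_. bernoulli_pmf mu))"

definition path_measure :: "real \<Rightarrow> real \<Rightarrow> (nat \<Rightarrow> bool \<times> ('r::finite \<Rightarrow> bool)) measure" where
  "path_measure lam mu = PiM UNIV (\<lambda>_::nat. measure_pmf (slot_pmf lam mu))"

definition arrivals_of :: "(nat \<Rightarrow> bool \<times> ('r \<Rightarrow> bool)) \<Rightarrow> nat \<Rightarrow> bool" where
  "arrivals_of \<omega> t = fst (\<omega> t)"

definition receptions_of :: "(nat \<Rightarrow> bool \<times> ('r \<Rightarrow> bool)) \<Rightarrow> nat \<Rightarrow> 'r \<Rightarrow> bool" where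
  "receptions_of \<omega> t r = snd (\<omega> t) r"

text \<open>A (deterministic, causal) implementation of Algorithm 2(b): for every sample
path it produces a valid run, and the transmission of slot t depends only on the
arrivals up to slot t and on the receptions before slot t.\<close>
definition alg2b_policy :: "((nat \<Rightarrow> bool \<times> ('r \<Rightarrow> bool)) \<Rightarrow> nat \<Rightarrow> 'f::field cvec) \<Rightarrow> bool" where
  "alg2b_policy tx \<longleftrightarrow>
     (\<forall>\<omega>. valid_run (arrivals_of \<omega>) (receptions_of \<omega>) (tx \<omega>)) \<and>
     (\<forall>\<omega> \<omega>' t. (\<forall>s<t. \<omega> s = \<omega>' s) \<and> fst (\<omega> t) = fst (\<omega>' t) \<longrightarrow> tx \<omega> t = tx \<omega>' t)"

definition exp_queue :: "real \<Rightarrow> real \<Rightarrow> ((nat \<Rightarrow> bool \<times> ('r::finite \<Rightarrow> bool)) \<Rightarrow> nat \<Rightarrow> 'f::field cvec) \<Rightarrow> nat \<Rightarrow> real" where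
  "exp_queue lam mu tx t =
     integral\<^sup>L (path_measure lam mu)
       (\<lambda>\<omega>. real (card (queue (arrivals_of \<omega>) (receptions_of \<omega>) (tx \<omega>) t)))"

end

theory Submission
  imports Defs
begin

lemma sum_fun_apply: "finite S \<Longrightarrow> (sum f S :: 'a \<Rightarrow> 'b::comm_monoid_add) x = (\<Sum>i\<in>S. f i x)"
  by (induction S rule: finite_induct) auto

interpretation cv: vector_space "cscale :: 'f::field \<Rightarrow> 'f cvec \<Rightarrow> 'f cvec"
  by unfold_locales (auto simp: cscale_def fun_eq_iff algebra_simps)

lemma cscale_apply[simp]: "cscale c v i = c * v i" by (simp add: cscale_def)

lemma cspan_eq: "cspan S = cv.span S" by (simp add: cspan_def)
lemma cdim_eq: "cdim S = cv.dim S" by (simp add: cdim_def)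

lemma subspace_sender: "cv.subspace (sender_space A :: 'f::field cvec set)"
  unfolding cv.subspace_def sender_space_def by auto


lemma seen_mono: "V \<subseteq> W \<Longrightarrow> seen V k \<Longrightarrow> seen W k"
  unfolding seen_def by blast

definition red :: "'f::field cvec set \<Rightarrow> nat \<Rightarrow> 'f cvec \<Rightarrow> bool" where
  "red V k w \<longleftrightarrow> w \<in> V \<and> w k = 1 \<and> (\<forall>i<k. w i = 0) \<and> (\<forall>i>k. w i \<noteq> 0 \<longrightarrow> \<not> seen V i)"

lemma subspace_closed:
  assumes "cv.subspace V" shows "cv.span V = V"
  using assms by simp

lemma seen_lt:
  assumes "V \<subseteq> sender_space N" "seen V k" shows "k < N"
proof (rule ccontr)
  assume "\<not> k < N"
  from assms(2) obtain v where "v \<in> V" "v k = 1" unfolding seen_def by auto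
  with assms(1) \<open>\<not> k < N\<close> show False unfolding sender_space_def by auto
qed

lemma red_exists:
  assumes sub: "cv.subspace V" and VN: "V \<subseteq> sender_space N" and sk: "seen V k"
  shows "\<exists>w. red V k w"
  using sk
proof (induction "N - k" arbitrary: k rule: less_induct)
  case (less k)
  from less.prems obtain v where v: "v \<in> V" "v k = 1" "\<forall>i<k. v i = 0" unfolding seen_def by auto
  have kN: "k < N" using seen_lt[OF VN less.prems] .
  define Sk where "Sk = {i. k < i \<and> i < N \<and> seen V i}"
  have finS: "finite Sk" unfolding Sk_def by auto
  have "\<forall>i\<in>Sk. \<exists>w. red V i w"
  proof
    fix i assume "i \<in> Sk"
    then have "N - i < N - k" "seen V i" unfolding Sk_def by auto
    then show "\<exists>w. red V i w" using less.hyps by blast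
  qed
  then obtain W where W: "\<And>i. i \<in> Sk \<Longrightarrow> red V i (W i)" by metis
  define w where "w = v - (\<Sum>i\<in>Sk. cscale (v i) (W i))"
  have wapp: "w j = v j - (\<Sum>i\<in>Sk. v i * W i j)" for j
    unfolding w_def by (simp add: sum_fun_apply[OF finS])
  have WV: "W i \<in> V" if "i \<in> Sk" for i using W[OF that] unfolding red_def by auto
  have "w \<in> V"
  proof -
    have "w \<in> cv.span V" unfolding w_def
      by (intro cv.span_diff cv.span_sum cv.span_scale) (auto intro: cv.span_base v WV)
    then show ?thesis using sub cv.span_eq_iff by blast
  qed
  moreover have "w j = v j" if "j \<le> k" for j
  proof -
    have "W i j = 0" if "i \<in> Sk" for i using W[OF that] that \<open>j \<le> k\<close> unfolding red_def Sk_def by auto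
    then show ?thesis by (simp add: wapp)
  qed
  moreover have "w j = 0" if "j > k" "seen V j" for j
  proof (cases "j < N")
    case False
    have "v j = 0" using v(1) VN False unfolding sender_space_def by auto
    moreover have "W i j = 0" if "i \<in> Sk" for i using WV[OF that] VN False unfolding sender_space_def by auto
    ultimately show ?thesis by (simp add: wapp)
  next
    case True
    then have jS: "j \<in> Sk" using that unfolding Sk_def by auto
    have z: "W i j = 0" if "i \<in> Sk - {j}" for i
    proof (cases "j < i")
      case True then show ?thesis using W[of i] that unfolding red_def by auto
    next
      case False then have "i < j" using that by auto
      then show ?thesis using W[of i] that \<open>seen V j\<close> unfolding red_def by auto
    qed
    have "(\<Sum>i\<in>Sk. v i * W i j) = v j * W j j + (\<Sum>i\<in>Sk - {j}. v i * W i j)"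
      using finS jS by (simp add: sum.remove)
    also have "\<dots> = v j" using z W[OF jS] unfolding red_def by simp
    finally show ?thesis by (simp add: wapp)
  qed
  ultimately have "red V k w" unfolding red_def using v by (auto; metis less_imp_le_nat)
  then show ?case by blast
qed

lemma red_unique:
  assumes sub: "cv.subspace V" and r1: "red V k w1" and r2: "red V k w2"
  shows "w1 = w2"
proof (rule ccontr)
  assume ne: "w1 \<noteq> w2"
  define d where "d = w1 - w2"
  have dV: "d \<in> V" using r1 r2 sub unfolding d_def red_def by (auto intro: cv.subspace_diff)
  have "\<exists>i. d i \<noteq> 0" using ne unfolding d_def by (auto simp: fun_eq_iff)
  define l where "l = (LEAST i. d i \<noteq> 0)"
  have dl: "d l \<noteq> 0" unfolding l_def by (rule LeastI_ex) fact
  have below: "d i = 0" if "i < l" for i using not_less_Least[of i "\<lambda>i. d i \<noteq> 0"] that unfolding l_def by auto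
  have "l \<noteq> k" using dl r1 r2 unfolding d_def red_def by auto
  moreover have "\<not> l < k" using dl r1 r2 unfolding d_def red_def by auto
  ultimately have lk: "l > k" by auto
  have "\<not> seen V l" using dl lk r1 r2 unfolding d_def red_def by auto
  moreover have "seen V l"
    unfolding seen_def
    by (rule bexI[of _ "cscale (inverse (d l)) d"]) (use dl below dV sub in \<open>auto intro: cv.subspace_scale\<close>)
  ultimately show False by blast
qed

lemma witness_red:
  assumes sub: "cv.subspace V" and VN: "V \<subseteq> sender_space N" and sk: "seen V k"
  shows "red V k (witness V k)"
proof -
  have "\<exists>!w. red V k w" using red_exists[OF assms] red_unique[OF sub] by blast
  then show ?thesis unfolding witness_def red_def[symmetric] by (rule theI')
qed


lemma span_witnesses:
  assumes sub: "cv.subspace V" and VN: "V \<subseteq> sender_space N"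
  shows "V \<subseteq> cv.span (witness V ` {k. k < N \<and> seen V k})"
proof -
  let ?W = "witness V ` {k. k < N \<and> seen V k}"
  have "\<forall>v\<in>V. (\<forall>i<m. v i = 0) \<longrightarrow> v \<in> cv.span ?W" for m
  proof (induction "N - m" arbitrary: m rule: less_induct)
    case (less m)
    show ?case
    proof (intro ballI impI)
      fix v assume vV: "v \<in> V" and z: "\<forall>i<m. v i = 0"
      show "v \<in> cv.span ?W"
      proof (cases "m < N")
        case False
        have "v i = 0" for i
        proof (cases "i < m")
          case False then have "i \<ge> N" using \<open>\<not> m < N\<close> by auto
          then show ?thesis using vV VN unfolding sender_space_def by auto
        qed (use z in auto)
        then have "v = 0" by auto
        then show ?thesis by (simp add: cv.span_zero)
      next
        case True
        show ?thesis
        proof (cases "v m = 0")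
          case True
          then have "\<forall>i<Suc m. v i = 0" using z by (auto simp: less_Suc_eq)
          moreover have "N - Suc m < N - m" using \<open>m < N\<close> by auto
          ultimately show ?thesis using less.hyps vV by blast
        next
          case False
          have sm: "seen V m" unfolding seen_def
            by (rule bexI[of _ "cscale (inverse (v m)) v"]) (use False z vV sub in \<open>auto intro: cv.subspace_scale\<close>)
          have r: "red V m (witness V m)" by (rule witness_red[OF sub VN sm])
          define v' where "v' = v - cscale (v m) (witness V m)"
          have v'V: "v' \<in> V" unfolding v'_def using r vV sub unfolding red_def
            by (auto intro: cv.subspace_diff cv.subspace_scale)
          have "\<forall>i<Suc m. v' i = 0" using z r unfolding v'_def red_def by (auto simp: less_Suc_eq)
          moreover have "N - Suc m < N - m" using \<open>m < N\<close> by auto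
          ultimately have "v' \<in> cv.span ?W" using less.hyps v'V by blast
          moreover have "witness V m \<in> cv.span ?W" using \<open>m < N\<close> sm by (auto intro: cv.span_base)
          ultimately have "v' + cscale (v m) (witness V m) \<in> cv.span ?W"
            by (intro cv.span_add cv.span_scale)
          then show ?thesis unfolding v'_def by simp
        qed
      qed
    qed
  qed
  from this[of 0] show ?thesis by auto
qed

lemma dim_le_seen:
  assumes sub: "cv.subspace V" and VN: "V \<subseteq> sender_space N"
  shows "cv.dim V \<le> card {k. k < N \<and> seen V k}"
proof -
  have "cv.dim V \<le> card (witness V ` {k. k < N \<and> seen V k})"
    by (rule cv.dim_le_card[OF span_witnesses[OF assms]]) auto
  also have "\<dots> \<le> card {k. k < N \<and> seen V k}" by (rule card_image_le) auto
  finally show ?thesis .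
qed

definition unitv :: "nat \<Rightarrow> 'f::field cvec" where "unitv i = (\<lambda>j. if j = i then 1 else 0)"

lemma dim_sender: "cv.dim (sender_space N :: 'f::field cvec set) = N"
proof -
  let ?E = "(unitv :: nat \<Rightarrow> 'f cvec) ` {..<N}"
  have inj: "inj_on (unitv :: nat \<Rightarrow> 'f cvec) {..<N}"
    unfolding inj_on_def unitv_def by (auto simp: fun_eq_iff split: if_splits)
  have ind: "cv.independent ?E"
    unfolding cv.dependent_def
  proof clarsimp
    fix i assume "i < N" and sp: "unitv i \<in> cv.span (?E - {unitv i})"
    have "cv.span (?E - {unitv i}) \<subseteq> {v. v i = 0}"
      by (rule cv.span_minimal) (auto simp: cv.subspace_def unitv_def)
    with sp show False unfolding unitv_def by auto
  qed
  have eq: "sender_space N = cv.span ?E"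
  proof
    show "sender_space N \<subseteq> cv.span ?E"
    proof
      fix v :: "'f cvec" assume "v \<in> sender_space N"
      then have "v = (\<Sum>i<N. cscale (v i) (unitv i))"
      proof (intro ext)
        fix x assume vs: "v \<in> sender_space N"
        have "(\<Sum>i<N. cscale (v i) (unitv i)) x = (\<Sum>i<N. v i * unitv i x)"
          by (simp add: sum_fun_apply)
        also have "\<dots> = (\<Sum>i<N. if i = x then v i else 0)"
          by (intro sum.cong) (auto simp: unitv_def)
        also have "\<dots> = v x" using vs by (simp add: sender_space_def)
        finally show "v x = (\<Sum>i<N. cscale (v i) (unitv i)) x" by simp
      qed
      also have "\<dots> \<in> cv.span ?E" by (intro cv.span_sum cv.span_scale cv.span_base) auto
      finally show "v \<in> cv.span ?E" .
    qed
    show "cv.span ?E \<subseteq> sender_space N"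
      by (rule cv.span_minimal[OF _ subspace_sender]) (auto simp: unitv_def sender_space_def)
  qed
  show ?thesis unfolding eq using cv.dim_span_eq_card_independent[OF ind] card_image[OF inj] by simp
qed


lemma arr_Suc: "arr a (Suc t) = arr a t + (if a t then 1 else 0)"
proof -
  have "{s. s < Suc t \<and> a s} = {s. s < t \<and> a s} \<union> (if a t then {t} else {})"
    by (auto simp: less_Suc_eq)
  then show ?thesis unfolding arr_def by (auto simp: card_insert_if)
qed

lemma arr_0[simp]: "arr a 0 = 0" by (simp add: arr_def)

lemma arr_mono: "s \<le> t \<Longrightarrow> arr a s \<le> arr a t"
  unfolding arr_def by (intro card_mono) auto

lemma U_idx_lt: "u \<in> U_idx A K \<Longrightarrow> u < A"
  unfolding U_idx_def active_rcv_def by auto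

lemma valid_tx_sender: "valid_tx A K g \<Longrightarrow> g \<in> sender_space A"
  unfolding valid_tx_def sender_space_def using U_idx_lt by fastforce

lemma know_subspace: "cv.subspace (know e g t r)"
  unfolding know_def cspan_eq by simp

lemma know_mono: "know e g t r \<subseteq> know e g (Suc t) r"
  unfolding know_def cspan_eq by (intro cv.span_mono) auto

lemma g_in_know: "e t r \<Longrightarrow> g t \<in> know e g (Suc t) r"
  unfolding know_def cspan_eq by (intro cv.span_base) auto

lemma know_sender:
  assumes "valid_run a e g" shows "know e g t r \<subseteq> sender_space (arr a t)"
  unfolding know_def cspan_eq
proof (rule cv.span_minimal[OF _ subspace_sender], clarify)
  fix s assume "s < t" "e s r"
  have "g s \<in> sender_space (arr a (Suc s))"
    using assms unfolding valid_run_def by (auto intro: valid_tx_sender)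
  moreover have "arr a (Suc s) \<le> arr a t" using \<open>s < t\<close> by (intro arr_mono) auto
  ultimately show "g s \<in> sender_space (arr a t)" unfolding sender_space_def by auto
qed

lemma seen_before_next:
  "i < next_unseen V \<Longrightarrow> seen V i"
  unfolding next_unseen_def using not_less_Least by blast

lemma innovation:
  assumes vt: "valid_tx A K g" and sub: "cv.subspace (K r)" and KN: "K r \<subseteq> sender_space N"
    and act: "next_unseen (K r) < A"
    and K': "K r \<subseteq> K'" "cv.subspace K'" "g \<in> K'"
  shows "seen K' (next_unseen (K r))"
proof -
  define u where "u = next_unseen (K r)"
  have uU: "u \<in> U_idx A K" and rR: "r \<in> R_set A K u"
    using act unfolding u_def U_idx_def R_set_def active_rcv_def by auto
  from vt obtain \<alpha> where \<alpha>: "\<forall>u\<in>U_idx A K. \<forall>r\<in>R_set A K u.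
            \<alpha> u \<noteq> (\<Sum>u'\<in>{u'\<in>U_idx A K. u' < u}. \<alpha> u' * witness (K r) u' u)"
    and g: "g = (\<lambda>i. if i \<in> U_idx A K then \<alpha> i else 0)"
    unfolding valid_tx_def by blast
  define Us where "Us = {u'\<in>U_idx A K. u' < u}"
  have finUs: "finite Us" unfolding Us_def by (rule finite_subset[of _ "{..<u}"]) auto
  have red: "red (K r) u' (witness (K r) u')" if "u' \<in> Us" for u'
    using that by (intro witness_red[OF sub KN] seen_before_next) (auto simp: Us_def u_def)
  define d where "d = g - (\<Sum>u'\<in>Us. cscale (\<alpha> u') (witness (K r) u'))"
  have dapp: "d i = g i - (\<Sum>u'\<in>Us. \<alpha> u' * witness (K r) u' i)" for i
    unfolding d_def by (simp add: sum_fun_apply[OF finUs])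
  have "d \<in> cv.span K'" unfolding d_def
    using K' red by (intro cv.span_diff cv.span_sum cv.span_scale) (auto intro: cv.span_base simp: red_def)
  then have dK: "d \<in> K'" using K'(2) cv.span_eq_iff by blast
  have du: "d u \<noteq> 0" using \<alpha> uU rR unfolding dapp g Us_def by auto
  have dz: "d i = 0" if "i < u" for i
  proof -
    have "(\<Sum>u'\<in>Us. \<alpha> u' * witness (K r) u' i) = (\<Sum>u'\<in>Us. if u' = i then \<alpha> u' else 0)"
    proof (intro sum.cong refl)
      fix u' assume u': "u' \<in> Us"
      have si: "seen (K r) i" using that seen_before_next unfolding u_def by blast
      show "\<alpha> u' * witness (K r) u' i = (if u' = i then \<alpha> u' else 0)"
        using red[OF u'] si by (cases "u' = i"; cases "i < u'") (auto simp: red_def)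
    qed
    also have "\<dots> = (if i \<in> Us then \<alpha> i else 0)" using finUs by (simp add: sum.delta')
    finally show ?thesis using that unfolding dapp g Us_def by auto
  qed
  show ?thesis unfolding u_def[symmetric] seen_def
    by (rule bexI[of _ "cscale (inverse (d u)) d"]) (use du dz dK K'(2) in \<open>auto intro: cv.subspace_scale\<close>)
qed


definition stepq :: "nat \<Rightarrow> bool \<Rightarrow> bool \<Rightarrow> nat" where
  "stepq q x s = (let y = q + (if x then 1 else 0) in if s \<and> 0 < y then y - 1 else y)"

fun lq :: "(nat \<Rightarrow> bool) \<Rightarrow> (nat \<Rightarrow> bool) \<Rightarrow> nat \<Rightarrow> nat" where
  "lq a s 0 = 0"
| "lq a s (Suc t) = stepq (lq a s t) (a t) (s t)"

lemma stepq_mono: "q \<le> q' \<Longrightarrow> stepq q x s \<le> stepq q' x s"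
  unfolding stepq_def Let_def by auto

definition Ur :: "(nat \<Rightarrow> bool) \<Rightarrow> (nat \<Rightarrow> 'r \<Rightarrow> bool) \<Rightarrow> (nat \<Rightarrow> 'f::field cvec) \<Rightarrow> nat \<Rightarrow> 'r \<Rightarrow> nat" where
  "Ur a e g t r = card {k. k < arr a t \<and> \<not> seen (know e g t r) k}"

lemma Ur_step:
  assumes vr: "valid_run a e g"
  shows "Ur a e g (Suc t) r \<le> stepq (Ur a e g t r) (a t) (e t r)"
proof -
  define A where "A = arr a t"
  define A' where "A' = arr a (Suc t)"
  define K where "K = know e g t r"
  define K' where "K' = know e g (Suc t) r"
  define S where "S = {k. k < A' \<and> \<not> seen K k}"
  define S' where "S' = {k. k < A' \<and> \<not> seen K' k}"
  define x where "x = Ur a e g t r + (if a t then 1 else 0)"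
  have KK': "K \<subseteq> K'" unfolding K_def K'_def by (rule know_mono)
  have SS': "S' \<subseteq> S" unfolding S_def S'_def using seen_mono[OF KK'] by auto
  have finS: "finite S" unfolding S_def by auto
  have "S \<subseteq> {k. k < A \<and> \<not> seen K k} \<union> {A..<A'}" unfolding S_def by auto
  then have "card S \<le> card ({k. k < A \<and> \<not> seen K k} \<union> {A..<A'})"
    by (intro card_mono) auto
  also have "\<dots> \<le> card {k. k < A \<and> \<not> seen K k} + card {A..<A'}" by (rule card_Un_le)
  finally have "card S \<le> card {k. k < A \<and> \<not> seen K k} + card {A..<A'}" .
  then have cS: "card S \<le> x" unfolding x_def Ur_def A_def K_def A'_def arr_Suc by simp
  have cS': "card S' \<le> card S" by (rule card_mono[OF finS SS'])
  have "Ur a e g (Suc t) r = card S'" unfolding Ur_def S'_def A'_def K'_def ..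
  moreover have "card S' \<le> stepq (Ur a e g t r) (a t) (e t r)"
  proof (cases "e t r \<and> S \<noteq> {}")
    case True
    then obtain k where k: "k \<in> S" by auto
    define u where "u = next_unseen K"
    have "\<not> seen K u" unfolding u_def next_unseen_def
      by (rule LeastI[of _ k]) (use k in \<open>auto simp: S_def\<close>)
    moreover have "u \<le> k" unfolding u_def next_unseen_def
      by (rule Least_le) (use k in \<open>auto simp: S_def\<close>)
    ultimately have uS: "u \<in> S" using k unfolding S_def by auto
    have "seen K' u" unfolding u_def K_def K'_def
    proof (rule innovation[where K="know e g t" and A=A' and N=A])
      show "valid_tx A' (know e g t) (g t)" using vr unfolding valid_run_def A'_def by blast
      show "cv.subspace (know e g t r)" by (rule know_subspace)
      show "know e g t r \<subseteq> sender_space A" unfolding A_def by (rule know_sender[OF vr])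
      show "next_unseen (know e g t r) < A'" using uS unfolding u_def K_def S_def by auto
      show "know e g t r \<subseteq> know e g (Suc t) r" by (rule know_mono)
      show "cv.subspace (know e g (Suc t) r)" by (rule know_subspace)
      show "g t \<in> know e g (Suc t) r" using True by (intro g_in_know) auto
    qed
    then have "S' \<subseteq> S - {u}" using SS' unfolding S'_def by auto
    then have "card S' \<le> card S - 1" using card_mono[of "S - {u}" S'] finS uS by auto
    moreover have "0 < x" using uS finS cS card_gt_0_iff[of S] by auto
    ultimately show ?thesis using cS True unfolding stepq_def Let_def x_def by auto
  next
    case False
    show ?thesis
    proof (cases "e t r")
      case False then show ?thesis using cS cS' unfolding stepq_def Let_def x_def by auto
    next
      case True with False have "S = {}" by auto then have "S' = {}" using SS' by auto
      then show ?thesis by simp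
    qed
  qed
  ultimately show ?thesis by simp
qed

lemma Ur_le_lq:
  assumes vr: "valid_run a e g"
  shows "Ur a e g t r \<le> lq a (\<lambda>t. e t r) t"
proof (induction t)
  case 0 then show ?case by (simp add: Ur_def)
next
  case (Suc t)
  have "Ur a e g (Suc t) r \<le> stepq (Ur a e g t r) (a t) (e t r)" by (rule Ur_step[OF vr])
  also have "\<dots> \<le> stepq (lq a (\<lambda>t. e t r) t) (a t) (e t r)" by (rule stepq_mono[OF Suc.IH])
  finally show ?case by simp
qed

lemma queue_sub:
  "queue a e g t \<subseteq> {k. k < arr a t \<and> (\<exists>r. \<not> seen (know e g t r) k)}"
proof (induction t)
  case 0 then show ?case by simp
next
  case (Suc t)
  have "arr a t \<le> arr a (Suc t)" by (rule arr_mono) auto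
  with Suc show ?case by auto
qed

lemma card_queue_le_Ur:
  "card (queue a e g t) \<le> (\<Sum>r\<in>(UNIV::'r::finite set). Ur a e g t r)"
proof -
  have "queue a e g t \<subseteq> (\<Union>r. {k. k < arr a t \<and> \<not> seen (know e g t r) k})"
    using queue_sub by fastforce
  then have "card (queue a e g t) \<le> card (\<Union>r. {k. k < arr a t \<and> \<not> seen (know e g t r) k})"
    by (intro card_mono) auto
  also have "\<dots> \<le> (\<Sum>r\<in>UNIV. card {k. k < arr a t \<and> \<not> seen (know e g t r) k})"
    by (rule card_UN_le) auto
  finally show ?thesis unfolding Ur_def .
qed

lemma Ur_le_vq:
  assumes vr: "valid_run a e (g :: nat \<Rightarrow> 'f::field cvec)"
  shows "Ur a e g t r \<le> virtual_queue a e g t r"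
proof -
  define A where "A = arr a t"
  define K where "K = know e g t r"
  have "cv.dim K \<le> card {k. k < A \<and> seen K k}"
    unfolding K_def A_def by (rule dim_le_seen[OF know_subspace know_sender[OF vr]])
  moreover have "card {k. k < A \<and> seen K k} + card {k. k < A \<and> \<not> seen K k} = A"
  proof -
    have "card {k. k < A \<and> seen K k} + card {k. k < A \<and> \<not> seen K k} = card ({k. k < A \<and> seen K k} \<union> {k. k < A \<and> \<not> seen K k})"
      by (rule card_Un_disjoint[symmetric]) auto
    also have "{k. k < A \<and> seen K k} \<union> {k. k < A \<and> \<not> seen K k} = {..<A}" by auto
    finally show ?thesis by simp
  qed
  ultimately show ?thesis
    unfolding virtual_queue_def Ur_def cdim_eq dim_sender K_def[symmetric] A_def[symmetric] by linarith
qed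

lemma part1:
  assumes "valid_run a e (g :: nat \<Rightarrow> 'f::field cvec)"
  shows "card (queue a e g t) \<le> (\<Sum>r\<in>(UNIV::'r::finite set). virtual_queue a e g t r)"
  using card_queue_le_Ur[of a e g t] Ur_le_vq[OF assms] sum_mono[of UNIV "Ur a e g t"] by (meson order_trans)

lemma queue_le_lq:
  assumes "valid_run a e (g :: nat \<Rightarrow> 'f::field cvec)"
  shows "card (queue a e g t) \<le> (\<Sum>r\<in>(UNIV::'r::finite set). lq a (\<lambda>t. e t r) t)"
  using card_queue_le_Ur[of a e g t] Ur_le_lq[OF assms] sum_mono[of UNIV "Ur a e g t"] by (meson order_trans)


definition Qr :: "'r \<Rightarrow> nat \<Rightarrow> (nat \<Rightarrow> bool \<times> ('r \<Rightarrow> bool)) \<Rightarrow> nat" where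
  "Qr r t \<omega> = lq (\<lambda>i. fst (\<omega> i)) (\<lambda>i. snd (\<omega> i) r) t"

lemma lq_cong: "(\<forall>i<t. a i = a' i) \<Longrightarrow> (\<forall>i<t. s i = s' i) \<Longrightarrow> lq a s t = lq a' s' t"
  by (induction t) auto

lemma Qr_cong: "(\<forall>i<t. \<omega> i = \<omega>' i) \<Longrightarrow> Qr r t \<omega> = Qr r t \<omega>'"
  unfolding Qr_def by (rule lq_cong) auto

lemma Qr_Suc: "Qr r (Suc t) \<omega> = stepq (Qr r t \<omega>) (fst (\<omega> t)) (snd (\<omega> t) r)"
  unfolding Qr_def by simp

lemma lq_le: "lq a s t \<le> t"
proof (induction t)
  case (Suc t) then show ?case by (auto simp: stepq_def Let_def)
qed simp

lemma Qr_le: "Qr r t \<omega> \<le> t" unfolding Qr_def by (rule lq_le)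

lemma Qr_meas:
  fixes S :: "(bool \<times> ('r \<Rightarrow> bool)) pmf"
  shows "{..<t} \<subseteq> I \<Longrightarrow> Qr r t \<in> measurable (PiM I (\<lambda>_. measure_pmf S)) (count_space UNIV)"
proof (induction t)
  case 0 then show ?case by (simp add: Qr_def)
next
  case (Suc t)
  have tI: "t \<in> I" using Suc.prems by auto
  have IH: "Qr r t \<in> measurable (PiM I (\<lambda>_. measure_pmf S)) (count_space UNIV)"
    by (rule Suc.IH) (use Suc.prems in auto)
  have f: "(\<lambda>\<omega>. stepq q (fst (\<omega> t)) (snd (\<omega> t) r)) \<in> measurable (PiM I (\<lambda>_. measure_pmf S)) (count_space UNIV)" for q
    by (rule measurable_compose[OF measurable_component_singleton[OF tI]]) (simp only: measurable_pmf_measure1 space_count_space Pi_UNIV UNIV_I)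
  have "(\<lambda>\<omega>. stepq (Qr r t \<omega>) (fst (\<omega> t)) (snd (\<omega> t) r)) \<in> measurable (PiM I (\<lambda>_. measure_pmf S)) (count_space UNIV)"
    by (rule measurable_compose_countable[OF f IH])
  then show ?case unfolding Qr_Suc[abs_def] .
qed

lemma distr_Pi_pmf_restrict:
  assumes fin: "finite J"
  shows "distr (measure_pmf (Pi_pmf J d (\<lambda>_. p))) (PiM J (\<lambda>_. measure_pmf p)) (\<lambda>x. restrict x J) = PiM J (\<lambda>_. measure_pmf p)"
proof -
  interpret product_prob_space "\<lambda>_. measure_pmf p" J
    by (intro product_prob_spaceI) (simp add: measure_pmf.prob_space_axioms)
  show ?thesis
  proof (rule PiM_eqI)
    show "finite J" by fact
    show "sets (distr (measure_pmf (Pi_pmf J d (\<lambda>_. p))) (Pi\<^sub>M J (\<lambda>_. measure_pmf p)) (\<lambda>x. restrict x J)) = sets (Pi\<^sub>M J (\<lambda>_. measure_pmf p))"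
      by simp
    fix A assume A: "\<And>i. i \<in> J \<Longrightarrow> A i \<in> sets (measure_pmf p)"
    have "Pi\<^sub>E J A \<in> sets (Pi\<^sub>M J (\<lambda>i. measure_pmf p))"
      using A by (intro sets_PiM_I_finite fin) auto
    hence "emeasure (distr (measure_pmf (Pi_pmf J d (\<lambda>_. p))) (Pi\<^sub>M J (\<lambda>_. measure_pmf p)) (\<lambda>x. restrict x J)) (Pi\<^sub>E J A) =
           emeasure (measure_pmf (Pi_pmf J d (\<lambda>_. p))) ((\<lambda>x. restrict x J) -` Pi\<^sub>E J A)"
      by (subst emeasure_distr) (auto simp: space_PiM)
    also have "\<dots> = emeasure (measure_pmf (Pi_pmf J d (\<lambda>_. p))) (PiE_dflt J d A)"
      by (intro emeasure_eq_AE AE_pmfI) (auto simp: PiE_dflt_def set_Pi_pmf fin)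
    also have "\<dots> = (\<Prod>i\<in>J. emeasure (measure_pmf p) (A i))"
      by (simp add: measure_pmf.emeasure_eq_measure measure_Pi_pmf_PiE_dflt fin prod_ennreal)
    finally show "emeasure (distr (measure_pmf (Pi_pmf J d (\<lambda>_. p))) (Pi\<^sub>M J (\<lambda>_. measure_pmf p)) (\<lambda>x. restrict x J)) (Pi\<^sub>E J A) = (\<Prod>i\<in>J. emeasure (measure_pmf p) (A i))" .
  qed
qed

lemma distr_Qr:
  fixes S :: "(bool \<times> ('r \<Rightarrow> bool)) pmf"
  shows "distr (PiM UNIV (\<lambda>_. measure_pmf S)) (count_space UNIV) (Qr r t) =
         measure_pmf (map_pmf (Qr r t) (Pi_pmf {..<t} d (\<lambda>_. S)))"
proof -
  interpret product_prob_space "\<lambda>_. measure_pmf S" UNIV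
    by (intro product_prob_spaceI) (simp add: measure_pmf.prob_space_axioms)
  let ?J = "{..<t}"
  let ?P = "PiM UNIV (\<lambda>_. measure_pmf S)"
  let ?N = "PiM ?J (\<lambda>_. measure_pmf S)"
  let ?D = "Pi_pmf ?J d (\<lambda>_. S)"
  have mQ: "Qr r t \<in> measurable ?N (count_space UNIV)" by (rule Qr_meas) auto
  have mR: "(\<lambda>\<omega>. restrict \<omega> ?J) \<in> measurable ?P ?N" by (rule measurable_restrict_subset) auto
  have mR2: "(\<lambda>\<omega>. restrict \<omega> ?J) \<in> measurable (measure_pmf ?D) ?N"
    by (simp add: space_PiM)
  have eq: "Qr r t (restrict \<omega> ?J) = Qr r t \<omega>" for \<omega> by (rule Qr_cong) auto
  have "distr ?P (count_space UNIV) (Qr r t) = distr ?P (count_space UNIV) (Qr r t \<circ> (\<lambda>\<omega>. restrict \<omega> ?J))"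
    by (simp add: o_def eq)
  also have "\<dots> = distr (distr ?P ?N (\<lambda>\<omega>. restrict \<omega> ?J)) (count_space UNIV) (Qr r t)"
    by (rule distr_distr[OF mQ mR, symmetric])
  also have "distr ?P ?N (\<lambda>\<omega>. restrict \<omega> ?J) = ?N"
    by (rule distr_PiM_restrict_finite) auto
  also have "?N = distr (measure_pmf ?D) ?N (\<lambda>\<omega>. restrict \<omega> ?J)"
    by (rule distr_Pi_pmf_restrict[symmetric]) auto
  also have "distr (distr (measure_pmf ?D) ?N (\<lambda>\<omega>. restrict \<omega> ?J)) (count_space UNIV) (Qr r t) =
             distr (measure_pmf ?D) (count_space UNIV) (Qr r t \<circ> (\<lambda>\<omega>. restrict \<omega> ?J))"
    by (rule distr_distr[OF mQ mR2])
  also have "\<dots> = distr (measure_pmf ?D) (count_space UNIV) (Qr r t)"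
    by (simp add: o_def eq)
  also have "\<dots> = measure_pmf (map_pmf (Qr r t) ?D)" by (simp add: map_pmf_rep_eq)
  finally show ?thesis .
qed

fun distq :: "(bool \<times> bool) pmf \<Rightarrow> nat \<Rightarrow> nat pmf" where
  "distq B 0 = return_pmf 0"
| "distq B (Suc t) = map_pmf (\<lambda>(y,q). stepq q (fst y) (snd y)) (pair_pmf B (distq B t))"

lemma map_Qr:
  fixes S :: "(bool \<times> ('r \<Rightarrow> bool)) pmf"
  shows "map_pmf (Qr r t) (Pi_pmf {..<t} d (\<lambda>_. S)) = distq (map_pmf (\<lambda>y. (fst y, snd y r)) S) t"
proof (induction t)
  case 0 then show ?case by (simp add: Qr_def)
next
  case (Suc t)
  let ?X = "Pi_pmf {..<t} d (\<lambda>_. S)"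
  let ?h = "\<lambda>y::bool \<times> ('r \<Rightarrow> bool). (fst y, snd y r)"
  have "Pi_pmf {..<Suc t} d (\<lambda>_. S) = map_pmf (\<lambda>(y,f). f(t:=y)) (pair_pmf S ?X)"
    unfolding lessThan_Suc by (rule Pi_pmf_insert) auto
  then have "map_pmf (Qr r (Suc t)) (Pi_pmf {..<Suc t} d (\<lambda>_. S)) =
        map_pmf (\<lambda>(y,f). stepq (Qr r t f) (fst (?h y)) (snd (?h y))) (pair_pmf S ?X)"
  proof (simp add: pmf.map_comp o_def, intro pmf.map_cong refl, clarify)
    fix y f
    have "Qr r t (f(t := y)) = Qr r t f" by (rule Qr_cong) auto
    then show "Qr r (Suc t) (f(t := y)) = stepq (Qr r t f) (fst y) (snd y r)"
      by (simp add: Qr_Suc)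
  qed
  also have "\<dots> = map_pmf (\<lambda>(y,q). stepq q (fst y) (snd y)) (map_pmf (\<lambda>(y,f). (?h y, Qr r t f)) (pair_pmf S ?X))"
    by (simp add: pmf.map_comp o_def case_prod_beta split_beta')
  also have "map_pmf (\<lambda>(y,f). (?h y, Qr r t f)) (pair_pmf S ?X) = pair_pmf (map_pmf ?h S) (map_pmf (Qr r t) ?X)"
    by (rule map_pair)
  finally show ?case using Suc.IH by simp
qed


lemma tail_alg:
  fixes Aa Dd \<beta> p0 p1 p2 :: real
  assumes "0 \<le> Aa" "0 < Dd" "Aa + Dd \<le> 1" "\<beta> = Aa / Dd"
    and "p0 \<le> \<beta> ^ j" "p1 \<le> \<beta> ^ Suc j" "p2 \<le> \<beta> ^ Suc (Suc j)"
  shows "p2 + (1 - Dd) * (p1 - p2) + Aa * (p0 - p1) \<le> \<beta> ^ Suc j"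
proof -
  have DA: "Dd * \<beta> = Aa" using assms by simp
  have "p2 + (1 - Dd) * (p1 - p2) + Aa * (p0 - p1) = Dd * p2 + (1 - Dd - Aa) * p1 + Aa * p0"
    by (simp add: algebra_simps)
  also have "\<dots> \<le> Dd * \<beta> ^ Suc (Suc j) + (1 - Dd - Aa) * \<beta> ^ Suc j + Aa * \<beta> ^ j"
    using assms by (intro add_mono mult_left_mono) auto
  also have "\<dots> = \<beta> ^ Suc j"
  proof -
    have e1: "Dd * \<beta> ^ Suc (Suc j) = Aa * \<beta> ^ Suc j" using DA by (simp add: algebra_simps)
    have e2: "Aa * \<beta> ^ j = Dd * \<beta> ^ Suc j" using DA[symmetric] by (simp add: algebra_simps)
    have "Dd * \<beta> ^ Suc (Suc j) + (1 - Dd - Aa) * \<beta> ^ Suc j + Aa * \<beta> ^ j =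
          Aa * \<beta> ^ Suc j + (1 - Dd - Aa) * \<beta> ^ Suc j + Dd * \<beta> ^ Suc j" by (simp only: e1 e2)
    then show ?thesis by (simp add: algebra_simps)
  qed
  finally show ?thesis .
qed

lemma slot_marginal:
  "map_pmf (\<lambda>y. (fst y, snd y r)) (slot_pmf lam mu :: (bool \<times> ('r::finite \<Rightarrow> bool)) pmf) =
   pair_pmf (bernoulli_pmf lam) (bernoulli_pmf mu)"
proof -
  have "map_pmf (\<lambda>y. (fst y, snd y r)) (slot_pmf lam mu :: (bool \<times> ('r::finite \<Rightarrow> bool)) pmf) =
        map_pmf (\<lambda>(a, f). (id a, (\<lambda>f. f r) f)) (slot_pmf lam mu :: (bool \<times> ('r::finite \<Rightarrow> bool)) pmf)"
    by (rule pmf.map_cong) (auto simp: split_beta)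
  also have "\<dots> = pair_pmf (map_pmf id (bernoulli_pmf lam)) (map_pmf (\<lambda>f. f r) (Pi_pmf (UNIV::'r set) False (\<lambda>_. bernoulli_pmf mu)))"
    unfolding slot_pmf_def by (rule map_pair)
  also have "\<dots> = pair_pmf (bernoulli_pmf lam) (bernoulli_pmf mu)"
    by (simp add: Pi_pmf_component)
  finally show ?thesis .
qed

lemma tail_bound:
  fixes lam mu :: real
  assumes lm: "0 \<le> lam" "lam \<le> 1" "0 \<le> mu" "mu \<le> 1" "0 < (1 - lam) * mu"
  defines "\<beta> \<equiv> lam * (1 - mu) / ((1 - lam) * mu)"
  shows "measure_pmf.prob (distq (pair_pmf (bernoulli_pmf lam) (bernoulli_pmf mu)) t) {q. k \<le> q} \<le> \<beta> ^ k"
proof (induction t arbitrary: k)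
  have b0: "0 \<le> \<beta>" unfolding \<beta>_def using lm by (intro divide_nonneg_pos mult_nonneg_nonneg) auto
  case 0 show ?case using b0 by (cases k) (auto simp: indicator_def)
next
  case (Suc t)
  let ?B = "pair_pmf (bernoulli_pmf lam) (bernoulli_pmf mu)"
  let ?X = "distq ?B t"
  let ?p = "\<lambda>i. measure_pmf.prob ?X {q. i \<le> q}"
  show ?case
  proof (cases k)
    case 0 then show ?thesis by simp
  next
    case (Suc j)
    define E1 where "E1 = {y::bool\<times>bool. \<not> (\<not> fst y \<and> snd y)}"
    define E2 where "E2 = {y::bool\<times>bool. fst y \<and> \<not> snd y}"
    let ?f = "\<lambda>(y::bool\<times>bool, q). stepq q (fst y) (snd y)"
    have sub: "?f -` {q. Suc j \<le> q} \<subseteq> (UNIV \<times> {q. Suc (Suc j) \<le> q}) \<union> (E1 \<times> {Suc j}) \<union> (E2 \<times> {j})"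
      by (auto simp: stepq_def Let_def E1_def E2_def split: if_splits)
    have "measure_pmf.prob (distq ?B (Suc t)) {q. k \<le> q} = measure_pmf.prob (pair_pmf ?B ?X) (?f -` {q. Suc j \<le> q})"
      using Suc by simp
    also have "\<dots> \<le> measure_pmf.prob (pair_pmf ?B ?X) ((UNIV \<times> {q. Suc (Suc j) \<le> q}) \<union> (E1 \<times> {Suc j}) \<union> (E2 \<times> {j}))"
      by (rule measure_pmf.finite_measure_mono[OF sub]) simp
    also have "\<dots> \<le> measure_pmf.prob (pair_pmf ?B ?X) (UNIV \<times> {q. Suc (Suc j) \<le> q}) + measure_pmf.prob (pair_pmf ?B ?X) (E1 \<times> {Suc j}) + measure_pmf.prob (pair_pmf ?B ?X) (E2 \<times> {j})"
      by (rule order_trans[OF measure_Un_le] add_mono measure_Un_le order_refl; simp)+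
    also have "\<dots> = ?p (Suc (Suc j)) + measure_pmf.prob ?B E1 * measure_pmf.prob ?X {Suc j} + measure_pmf.prob ?B E2 * measure_pmf.prob ?X {j}"
      by (simp add: measure_pmf_prob_product)
    also have "measure_pmf.prob ?X {Suc j} = ?p (Suc j) - ?p (Suc (Suc j))"
    proof -
      have "{q. Suc j \<le> q} = {Suc j} \<union> {q. Suc (Suc j) \<le> q}" by auto
      then have "?p (Suc j) = measure_pmf.prob ?X {Suc j} + ?p (Suc (Suc j))"
        by (subst \<open>{q. Suc j \<le> q} = _\<close>) (rule measure_pmf.finite_measure_Union; auto)
      then show ?thesis by simp
    qed
    also have "measure_pmf.prob ?X {j} = ?p j - ?p (Suc j)"
    proof -
      have "{q. j \<le> q} = {j} \<union> {q. Suc j \<le> q}" by auto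
      then have "?p j = measure_pmf.prob ?X {j} + ?p (Suc j)"
        by (subst \<open>{q. j \<le> q} = _\<close>) (rule measure_pmf.finite_measure_Union; auto)
      then show ?thesis by simp
    qed
    also have "measure_pmf.prob ?B E1 = 1 - (1 - lam) * mu"
    proof -
      have "E1 = UNIV - {False} \<times> {True}" unfolding E1_def by auto
      moreover have "measure_pmf.prob ?B (space (measure_pmf ?B) - {False} \<times> {True}) = 1 - measure_pmf.prob ?B ({False} \<times> {True})"
        by (rule measure_pmf.prob_compl) simp
      ultimately have "measure_pmf.prob ?B E1 = 1 - measure_pmf.prob ?B ({False} \<times> {True})"
        by simp
      also have "measure_pmf.prob ?B ({False} \<times> {True}) = (1 - lam) * mu"
        using lm by (simp add: measure_pmf_single pmf_pair)
      finally show ?thesis .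
    qed
    also have "measure_pmf.prob ?B E2 = lam * (1 - mu)"
    proof -
      have "E2 = {True} \<times> {False}" unfolding E2_def by auto
      then show ?thesis using lm by (simp add: measure_pmf_single pmf_pair)
    qed
    also have "?p (Suc (Suc j)) + (1 - (1 - lam) * mu) * (?p (Suc j) - ?p (Suc (Suc j))) + lam * (1 - mu) * (?p j - ?p (Suc j)) \<le> \<beta> ^ Suc j"
    proof (rule tail_alg)
      show "0 \<le> lam * (1 - mu)" using lm by auto
      show "0 < (1 - lam) * mu" by fact
      show "lam * (1 - mu) + (1 - lam) * mu \<le> 1"
      proof -
        have "0 \<le> (1 - lam) * (1 - mu) + lam * mu" using lm by auto
        then show ?thesis by (simp add: algebra_simps)
      qed
      show "\<beta> = lam * (1 - mu) / ((1 - lam) * mu)" by (simp add: \<beta>_def)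
    qed (rule Suc.IH)+
    finally show ?thesis using Suc by simp
  qed
qed


lemma set_distq: "set_pmf (distq B t) \<subseteq> {..t}"
proof (induction t)
  case (Suc t)
  then show ?case by (force simp: stepq_def Let_def split: if_splits)
qed simp

lemma geom_le:
  fixes \<beta> :: real assumes "0 \<le> \<beta>" "\<beta> < 1"
  shows "(\<Sum>k\<in>{1..t}. \<beta> ^ k) \<le> \<beta> / (1 - \<beta>)"
proof -
  have "(\<Sum>k\<in>{1..t}. \<beta> ^ k) * (1 - \<beta>) = \<beta> - \<beta> ^ Suc t"
  proof (induction t)
    case (Suc t)
    have "{1..Suc t} = insert (Suc t) {1..t}" by auto
    then have "(\<Sum>k\<in>{1..Suc t}. \<beta> ^ k) = \<beta> ^ Suc t + (\<Sum>k\<in>{1..t}. \<beta> ^ k)" by simp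
    then have "(\<Sum>k\<in>{1..Suc t}. \<beta> ^ k) * (1 - \<beta>) = \<beta> ^ Suc t * (1 - \<beta>) + (\<Sum>k\<in>{1..t}. \<beta> ^ k) * (1 - \<beta>)"
      by (simp add: distrib_right)
    also have "\<dots> = \<beta> ^ Suc t * (1 - \<beta>) + (\<beta> - \<beta> ^ Suc t)" using Suc.IH by simp
    also have "\<dots> = \<beta> - \<beta> ^ Suc (Suc t)" by (simp add: algebra_simps)
    finally show ?case .
  qed simp
  moreover have "0 \<le> \<beta> ^ Suc t" using assms by simp
  ultimately have "(\<Sum>k\<in>{1..t}. \<beta> ^ k) * (1 - \<beta>) \<le> \<beta>" by linarith
  then show ?thesis using assms by (simp add: pos_le_divide_eq)
qed

lemma exp_distq:
  fixes lam mu :: real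
  assumes lm: "0 < lam" "lam < mu" "mu < 1"
  shows "measure_pmf.expectation (distq (pair_pmf (bernoulli_pmf lam) (bernoulli_pmf mu)) t) real \<le> 1 / (1 - lam / mu)"
proof -
  let ?X = "distq (pair_pmf (bernoulli_pmf lam) (bernoulli_pmf mu)) t"
  define \<beta> where "\<beta> = lam * (1 - mu) / ((1 - lam) * mu)"
  have D: "0 < (1 - lam) * mu" using lm by auto
  have ind: "real q = (\<Sum>k\<in>{1..t}. indicator {q. k \<le> q} q)" if "q \<le> t" for q
  proof -
    have "(\<Sum>k\<in>{1..t}. indicator {q. k \<le> q} q :: real) = real (card ({1..t} \<inter> {k. k \<le> q}))"
      by (simp add: indicator_def sum.If_cases)
    also have "{1..t} \<inter> {k. k \<le> q} = {1..q}" using that by auto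
    finally show ?thesis by simp
  qed
  have "measure_pmf.expectation ?X real = measure_pmf.expectation ?X (\<lambda>q. \<Sum>k\<in>{1..t}. indicator {q. k \<le> q} q)"
    by (rule integral_cong_AE) (use set_distq ind in \<open>auto intro!: AE_pmfI\<close>)
  also have "\<dots> = (\<Sum>k\<in>{1..t}. measure_pmf.expectation ?X (indicator {q. k \<le> q}))"
    by (rule Bochner_Integration.integral_sum) (rule measure_pmf.integrable_const_bound[where B=1]; auto simp: indicator_def)
  also have "\<dots> = (\<Sum>k\<in>{1..t}. measure_pmf.prob ?X {q. k \<le> q})"
    by (simp add: Bochner_Integration.integral_indicator)
  also have "\<dots> \<le> (\<Sum>k\<in>{1..t}. \<beta> ^ k)"
    by (intro sum_mono) (unfold \<beta>_def, rule tail_bound, use lm D in auto)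
  also have "\<dots> \<le> \<beta> / (1 - \<beta>)"
  proof (rule geom_le)
    show "0 \<le> \<beta>" unfolding \<beta>_def using lm by (intro divide_nonneg_pos mult_nonneg_nonneg) auto
    have "lam * (1 - mu) < (1 - lam) * mu" using lm by (simp add: algebra_simps)
    then show "\<beta> < 1" unfolding \<beta>_def using D by simp
  qed
  also have "\<beta> / (1 - \<beta>) = lam * (1 - mu) / (mu - lam)"
  proof -
    have DA: "(1 - lam) * mu - lam * (1 - mu) = mu - lam" by (simp add: algebra_simps)
    have "1 - \<beta> = ((1 - lam) * mu - lam * (1 - mu)) / ((1 - lam) * mu)"
      unfolding \<beta>_def using D lm by (simp add: diff_divide_distrib)
    then have b1: "1 - \<beta> = (mu - lam) / ((1 - lam) * mu)" by (simp only: DA)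
    show ?thesis unfolding b1 unfolding \<beta>_def using D lm by simp
  qed
  also have "\<dots> \<le> 1 / (1 - lam / mu)"
  proof -
    have "1 / (1 - lam / mu) = mu / (mu - lam)" using lm by (simp add: field_simps)
    moreover have "lam * (1 - mu) \<le> mu"
    proof -
      have "lam * (1 - mu) \<le> lam * 1" using lm by (intro mult_left_mono) auto
      then show ?thesis using lm by linarith
    qed
    ultimately show ?thesis using lm by (simp add: divide_right_mono)
  qed
  finally show ?thesis .
qed


lemma exp_queue_bound:
  fixes tx :: "(nat \<Rightarrow> bool \<times> ('r::finite \<Rightarrow> bool)) \<Rightarrow> nat \<Rightarrow> 'f::field cvec"
  assumes pol: "alg2b_policy tx" and lm: "0 < lam" "lam < mu" "mu < 1"
  shows "exp_queue lam mu tx t \<le> real CARD('r) / (1 - lam / mu)"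
proof -
  let ?S = "slot_pmf lam mu :: (bool \<times> ('r \<Rightarrow> bool)) pmf"
  let ?P = "path_measure lam mu :: (nat \<Rightarrow> bool \<times> ('r \<Rightarrow> bool)) measure"
  let ?B = "pair_pmf (bernoulli_pmf lam) (bernoulli_pmf mu)"
  interpret product_prob_space "\<lambda>_. measure_pmf ?S" UNIV
    by (intro product_prob_spaceI) (simp add: measure_pmf.prob_space_axioms)
  have P: "?P = PiM UNIV (\<lambda>_. measure_pmf ?S)" unfolding path_measure_def ..
  define F where "F = (\<lambda>\<omega>. real (card (queue (arrivals_of \<omega>) (receptions_of \<omega>) (tx \<omega>) t)))"
  define G where "G = (\<lambda>\<omega>. \<Sum>r\<in>(UNIV::'r set). real (Qr r t \<omega>))"
  have FG: "F \<omega> \<le> G \<omega>" for \<omega>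
  proof -
    have vr: "valid_run (arrivals_of \<omega>) (receptions_of \<omega>) (tx \<omega>)" using pol unfolding alg2b_policy_def by blast
    have "lq (arrivals_of \<omega>) (\<lambda>t. receptions_of \<omega> t r) t = Qr r t \<omega>" for r
      unfolding Qr_def by (rule lq_cong) (auto simp: arrivals_of_def receptions_of_def)
    then show ?thesis using queue_le_lq[OF vr, of t] unfolding F_def G_def
      by (simp flip: of_nat_sum)
  qed
  have mQ: "(\<lambda>\<omega>. real (Qr r t \<omega>)) \<in> borel_measurable (PiM UNIV (\<lambda>_. measure_pmf ?S))" for r
    by (rule measurable_compose[OF Qr_meas]) auto
  have intQ: "integrable ?P (\<lambda>\<omega>. real (Qr r t \<omega>))" for r
    unfolding P by (rule integrable_const_bound[where B="real t"]) (auto simp: Qr_le mQ)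
  have eQ: "integral\<^sup>L ?P (\<lambda>\<omega>. real (Qr r t \<omega>)) \<le> 1 / (1 - lam / mu)" for r
  proof -
    have "integral\<^sup>L ?P (\<lambda>\<omega>. real (Qr r t \<omega>)) =
          integral\<^sup>L (distr (PiM UNIV (\<lambda>_. measure_pmf ?S)) (count_space UNIV) (Qr r t)) real"
      unfolding P by (rule integral_distr[symmetric]) (auto intro: Qr_meas)
    also have "distr (PiM UNIV (\<lambda>_. measure_pmf ?S)) (count_space UNIV) (Qr r t) =
               measure_pmf (map_pmf (Qr r t) (Pi_pmf {..<t} undefined (\<lambda>_. ?S)))"
      by (rule distr_Qr)
    also have "map_pmf (Qr r t) (Pi_pmf {..<t} undefined (\<lambda>_. ?S)) = distq ?B t"
      by (simp add: map_Qr slot_marginal)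
    finally show ?thesis using exp_distq[OF lm] by simp
  qed
  have "exp_queue lam mu tx t \<le> real CARD('r) * (1 / (1 - lam / mu))"
  proof (cases "integrable ?P F")
    case True
    have "exp_queue lam mu tx t = integral\<^sup>L ?P F" unfolding exp_queue_def F_def ..
    also have "\<dots> \<le> integral\<^sup>L ?P G"
      by (rule integral_mono[OF True]) (use intQ FG in \<open>auto simp: G_def\<close>)
    also have "\<dots> = (\<Sum>r\<in>(UNIV::'r set). integral\<^sup>L ?P (\<lambda>\<omega>. real (Qr r t \<omega>)))"
      unfolding G_def by (rule Bochner_Integration.integral_sum) (rule intQ)
    also have "\<dots> \<le> (\<Sum>r\<in>(UNIV::'r set). 1 / (1 - lam / mu))" by (rule sum_mono) (rule eQ)
    finally show ?thesis by simp
  next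
    case False
    then have "exp_queue lam mu tx t = 0" unfolding exp_queue_def F_def by (simp add: not_integrable_integral_eq)
    moreover have "0 \<le> 1 / (1 - lam / mu)" using lm by (simp add: field_simps)
    ultimately show ?thesis by simp
  qed
  then show ?thesis by simp
qed

theorem theorem6:
  assumes q_ge_n: "CARD('r::finite) \<le> CARD('f::{field,finite})"
  shows
    "(\<forall>(a :: nat \<Rightarrow> bool) (e :: nat \<Rightarrow> 'r \<Rightarrow> bool) (g :: nat \<Rightarrow> 'f cvec).
        valid_run a e g \<longrightarrow>
        (\<forall>t. card (queue a e g (Suc t)) \<le> (\<Sum>r\<in>UNIV. virtual_queue a e g (Suc t) r)))
   \<and> (\<forall>tx :: (nat \<Rightarrow> bool \<times> ('r \<Rightarrow> bool)) \<Rightarrow> nat \<Rightarrow> 'f cvec. alg2b_policy tx \<longrightarrow>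
        (\<forall>mu\<in>{0<..<1::real}. \<exists>C::real. \<forall>\<^sub>F lam in at_left mu.
            limsup (\<lambda>t. ereal (exp_queue lam mu tx t)) \<le> ereal (C / (1 - lam / mu)))
      \<and> (\<forall>lam\<in>{0<..<1::real}. \<exists>C::real. \<forall>\<^sub>F mu in at_right lam.
            limsup (\<lambda>t. ereal (exp_queue lam mu tx t)) \<le> ereal (C / (1 - lam / mu))))"
proof (intro conjI allI impI)
  fix a :: "nat \<Rightarrow> bool" and e :: "nat \<Rightarrow> 'r \<Rightarrow> bool" and g :: "nat \<Rightarrow> 'f cvec" and t
  assume "valid_run a e g"
  then show "card (queue a e g (Suc t)) \<le> (\<Sum>r\<in>UNIV. virtual_queue a e g (Suc t) r)"
    by (rule part1)
next
  fix tx :: "(nat \<Rightarrow> bool \<times> ('r \<Rightarrow> bool)) \<Rightarrow> nat \<Rightarrow> 'f cvec"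
  assume pol: "alg2b_policy tx"
  have key: "limsup (\<lambda>t. ereal (exp_queue lam mu tx t)) \<le> ereal (real CARD('r) / (1 - lam / mu))"
    if "0 < lam" "lam < mu" "mu < 1" for lam mu :: real
    by (rule Limsup_bounded) (use exp_queue_bound[OF pol that] in auto)
  show "\<forall>mu\<in>{0<..<1::real}. \<exists>C::real. \<forall>\<^sub>F lam in at_left mu.
            limsup (\<lambda>t. ereal (exp_queue lam mu tx t)) \<le> ereal (C / (1 - lam / mu))"
  proof
    fix mu :: real assume mu: "mu \<in> {0<..<1}"
    show "\<exists>C::real. \<forall>\<^sub>F lam in at_left mu.
            limsup (\<lambda>t. ereal (exp_queue lam mu tx t)) \<le> ereal (C / (1 - lam / mu))"
      by (rule exI[of _ "real CARD('r)"], unfold eventually_at_left_field, rule exI[of _ 0])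
         (use mu key in auto)
  qed
  show "\<forall>lam\<in>{0<..<1::real}. \<exists>C::real. \<forall>\<^sub>F mu in at_right lam.
            limsup (\<lambda>t. ereal (exp_queue lam mu tx t)) \<le> ereal (C / (1 - lam / mu))"
  proof
    fix lam :: real assume lam: "lam \<in> {0<..<1}"
    show "\<exists>C::real. \<forall>\<^sub>F mu in at_right lam.
            limsup (\<lambda>t. ereal (exp_queue lam mu tx t)) \<le> ereal (C / (1 - lam / mu))"
      by (rule exI[of _ "real CARD('r)"], unfold eventually_at_right_field, rule exI[of _ 1])
         (use lam key in auto)
  qed
qed

end
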